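(* Let $d$ be an integer and $x>0$ a real number with $0\leqslant d-1\leqslant x/2$. Then $$\sum_{K_{d-1}-d+1<k\leqslant K_{d-1}}\Big(d^2\lfloor x/k\rfloor+\frac{2dx}{\lfloor x/k\rfloor}-x^2F(x/k)\Big)=\frac{8d^2-4d-1}{3}\sqrt{(d-1)x}+O(d^{7/2}x^{-1/2})+O(d^2),$$ where $k$ runs over integers, with absolute implied constants.
   Context: $\lfloor\cdot\rfloor$ denotes the integer part. For an integer $d\geqslant 0$ and real $x>0$, $K_d=K_d(x)=\big\lfloor \big(d+\sqrt{d^2+4dx}\,\big)/2\big\rfloor$. For real $t$, $F(t)=\sum_{n>t-1}\frac{1}{n^2(n+1)^2}$, summed over positive integers $n>t-1$. *)

theory Defs
  imports "HOL-Analysis.Analysis"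
begin

definition Kfun :: "int \<Rightarrow> real \<Rightarrow> int" where
  "Kfun d x = \<lfloor>(real_of_int d + sqrt ((real_of_int d)\<^sup>2 + 4 * real_of_int d * x)) / 2\<rfloor>"

definition Ffun :: "real \<Rightarrow> real" where
  "Ffun t = infsum (\<lambda>n::nat. 1 / ((real n)\<^sup>2 * (real n + 1)\<^sup>2)) {n. 1 \<le> n \<and> real n > t - 1}"

end

theory Submission imports Defs "HOL-Real_Asymp.Real_Asymp" begin


lemma Ffun_bounds:
  fixes t :: real and M :: nat
  assumes M1: "1 \<le> M" and fl: "floor t = int M"
  shows "Ffun t \<le> 1/(3*real M^3) \<and> Ffun t \<ge> 1/(3*real M^3) - 4/(15*real M^5)"
proof -
  define a :: "nat \<Rightarrow> real" where "a n = 1 / ((real n)\<^sup>2 * (real n + 1)\<^sup>2)" for n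
  define u :: "nat \<Rightarrow> real" where "u n = 1/(3*(real n)^3)" for n
  define v :: "nat \<Rightarrow> real" where "v n = 1/(real n)^5" for n
  define b :: "nat \<Rightarrow> real" where "b n = 1/(3*(real n)^3*(real n+1)^3)" for n
  have seteq: "{n. 1 \<le> n \<and> real n > t - 1} = {M..}"
  proof (intro set_eqI iffI)
    fix n assume "n \<in> {n. 1 \<le> n \<and> real n > t - 1}"
    then have "real n + 1 > t" by auto
    then have "int n + 1 > floor t" by linarith
    then show "n \<in> {M..}" using fl by auto
  next
    fix n assume "n \<in> {M..}"
    then have "int n \<ge> floor t" "n \<ge> 1" using fl M1 by auto
    moreover have "t < real_of_int (floor t) + 1" by simp
    ultimately show "n \<in> {n. 1 \<le> n \<and> real n > t - 1}" by auto linarith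
  qed
  have aeq: "a n = u n - u (Suc n) - b n" if "n \<ge> 1" for n
  proof -
    have p: "real n > 0" using that by auto
    show ?thesis unfolding a_def u_def b_def using p
      by (simp add: field_simps) algebra
  qed
  have bnn: "b n \<ge> 0" for n unfolding b_def by simp
  have ble: "b n \<le> 4/15 * (v n - v (Suc n))" if "n \<ge> 1" for n
  proof -
    define N where "N = real n"
    have p: "N \<ge> 1" using that by (auto simp: N_def)
    have e5: "(N+1)^5 = N^5 + 5*N^4 + 10*N^3+10*N^2+5*N+1" by algebra
    have h1: "(N+1)^5 - N^5 \<ge> 5*N^4" using e5 p by simp
    have h2: "v n - v (Suc n) = ((N+1)^5 - N^5)/(N^5*(N+1)^5)"
      using p by (simp add: v_def N_def field_simps)
    have h3: "((N+1)^5 - N^5)/(N^5*(N+1)^5) \<ge> 5*N^4/(N^5*(N+1)^5)"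
      using h1 p by (intro divide_right_mono) auto
    have h4: "5*N^4/(N^5*(N+1)^5) = 5/(N*(N+1)^5)" using p by (simp add: divide_simps) algebra
    have "N*N \<ge> 1*N" using p by (intro mult_right_mono) auto
    moreover have "(N+1)^2 = N*N+2*N+1" "4*N^2 = 4*(N*N)" by algebra+
    ultimately have h5: "(N+1)^2 \<le> 4*N^2" using p by linarith
    have h6: "(N+1)^2 * (3*N*(N+1)^3) \<le> 4*N^2 * (3*N*(N+1)^3)"
      using h5 p by (intro mult_right_mono) auto
    have e1: "3*N*(N+1)^5 = (N+1)^2*(3*N*(N+1)^3)" and e2: "4*(3*N^3*(N+1)^3) = 4*N^2*(3*N*(N+1)^3)" by algebra+
    have h6': "3*N*(N+1)^5 \<le> 4*(3*N^3*(N+1)^3)" by (subst e1, subst e2, rule h6)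
    have "1/(3*N^3*(N+1)^3) = 4/(4*(3*N^3*(N+1)^3))" by simp
    also have "\<dots> \<le> 4/(3*N*(N+1)^5)" using h6' p by (intro divide_left_mono) auto
    finally have h7: "1/(3*N^3*(N+1)^3) \<le> 4/(3*N*(N+1)^5)" .
    have "b n = 1/(3*N^3*(N+1)^3)" by (simp add: b_def N_def)
    also have "\<dots> \<le> 4/15 * (5/(N*(N+1)^5))" using h7 by simp
    also have "\<dots> \<le> 4/15 * (v n - v (Suc n))"
    proof -
      have "5/(N*(N+1)^5) \<le> v n - v (Suc n)" using h2 h3 h4 by argo
      then show ?thesis by (intro mult_left_mono) auto
    qed
    finally show ?thesis .
  qed
  have tel: "(\<lambda>j. w (j+M) - w (Suc j + M)) sums (w M)" if "w \<longlonglongrightarrow> 0" for w :: "nat \<Rightarrow> real"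
  proof -
    have "(\<lambda>j. w (j+M)) \<longlonglongrightarrow> 0" using that by (rule LIMSEQ_ignore_initial_segment)
    from telescope_sums[OF this] have "(\<lambda>j. w (Suc j+M) - w (j + M)) sums (0 - w (0+M))" by simp
    from sums_minus[OF this] show ?thesis by simp
  qed
  have u0: "u \<longlonglongrightarrow> 0" unfolding u_def
    by real_asymp
  have v0: "v \<longlonglongrightarrow> 0" unfolding v_def by real_asymp
  have us: "(\<lambda>j. u (j+M) - u (Suc j + M)) sums (u M)" using tel[OF u0] .
  have vs: "(\<lambda>j. 4/15 * (v (j+M) - v (Suc j + M))) sums (4/15 * v M)" using sums_mult[OF tel[OF v0]] .
  define b' where "b' j = b (j+M)" for j
  have bsum: "summable b'"
  proof (rule summable_comparison_test)
    show "\<exists>N. \<forall>n\<ge>N. norm (b' n) \<le> 4/15 * (v (n+M) - v (Suc n + M))"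
      using ble bnn M1 by (auto simp: b'_def)
    show "summable (\<lambda>j. 4/15 * (v (j+M) - v (Suc j + M)))" using vs by (rule sums_summable)
  qed
  have as: "(\<lambda>j. a (j+M)) sums (u M - suminf b')"
  proof -
    have "(\<lambda>j. (u (j+M) - u (Suc j + M)) - b' j) sums (u M - suminf b')"
      by (rule sums_diff[OF us summable_sums[OF bsum]])
    moreover have "(\<lambda>j. (u (j+M) - u (Suc j + M)) - b' j) = (\<lambda>j. a (j+M))"
      using aeq M1 by (auto simp: b'_def)
    ultimately show ?thesis by simp
  qed
  have hs: "((\<lambda>j. a (j+M)) has_sum (u M - suminf b')) UNIV"
    by (rule sums_nonneg_imp_has_sum[OF as]) (simp add: a_def)
  have img: "{M..} = (\<lambda>j. j+M) ` UNIV"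
  proof (intro set_eqI iffI)
    fix x assume "x \<in> {M..}" then show "x \<in> (\<lambda>j. j+M) ` UNIV"
      by (intro image_eqI[where x="x - M"]) auto
  qed auto
  have "(a has_sum (u M - suminf b')) {M..}"
    unfolding img using hs by (subst has_sum_reindex) (auto simp: o_def)
  then have Feq: "Ffun t = u M - suminf b'"
    unfolding Ffun_def seteq a_def[abs_def] by (rule infsumI)
  have b0: "suminf b' \<ge> 0" using bsum bnn by (intro suminf_nonneg) (auto simp: b'_def)
  have b1: "suminf b' \<le> 4/15 * v M"
    by (rule sums_le[OF _ summable_sums[OF bsum] vs]) (use ble M1 in \<open>auto simp: b'_def\<close>)
  show ?thesis using Feq b0 b1 by (simp add: u_def v_def)
qed


lemma term_bound:
  fixes D x sv m G :: real
  assumes D1: "D \<ge> 1" and xs: "x = D* sv^2" and s0: "sv \<ge> 1" and m1: "m \<ge> 1"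
    and e: "\<bar>m - sv\<bar> \<le> 2" and sm: "sv \<le> 3*m"
    and G1: "G \<le> 1/(3*m^3)" and G2: "G \<ge> 1/(3*m^3) - 4/(15*m^5)"
  shows "\<bar>(D+1)^2*m + 2*(D+1)*x/m - x^2*G - sv*((D+1)^2 + 2*(D+1)*D - D^2/3)\<bar> \<le> 2 + 233*D^2/sv"
proof -
  define e where "e = m - sv"
  have mpos: "m > 0" and spos: "sv > 0" using m1 s0 by auto
  have ident: "(D+1)^2*m + 2*(D+1)*x/m - x^2/(3*m^3) - sv*((D+1)^2 + 2*(D+1)*D - D^2/3)
     = e + 2*D*e^2/m + D^2*e^3*(sv+3*m)/(3*m^3)"
    unfolding e_def xs using mpos by (simp add: field_simps) algebra
  define E where "E = x^2*(1/(3*m^3) - G)"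
  have E0: "E \<ge> 0" using G1 by (simp add: E_def)
  have E1: "E \<le> x^2*(4/(15*m^5))" using G2 unfolding E_def by (intro mult_left_mono) auto
  have m5: "sv^5 \<le> 243 * m^5"
  proof -
    have "sv^5 \<le> (3*m)^5" using sm spos by (intro power_mono) auto
    then show ?thesis by simp
  qed
  have "x^2*(4/(15*m^5)) = 4/15 * (D^2* sv^4/m^5)" unfolding xs by (simp add: field_simps power_mult_distrib)
  also have "D^2* sv^4/m^5 \<le> D^2* sv^4/(sv^5/243)"
    using m5 spos mpos by (intro divide_left_mono) auto
  also have "D^2* sv^4/(sv^5/243) = 243*D^2/sv" using spos by (simp add: field_simps eval_nat_numeral)
  finally have E2: "E \<le> 4/15*(243*D^2/sv)" using E1 by simp
  have ea: "\<bar>e\<bar> \<le> 2" using e by (simp add: e_def)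
  have e2: "e^2 \<le> 4"
  proof -
    have "\<bar>e\<bar>^2 \<le> 2^2" using ea by (intro power_mono) auto
    then show ?thesis by simp
  qed
  have e3: "\<bar>e\<bar>^3 \<le> 8"
  proof -
    have "\<bar>e\<bar>^3 \<le> 2^3" using ea by (intro power_mono) auto
    then show ?thesis by simp
  qed
  have im: "1/m \<le> 3/sv" using sm mpos spos by (simp add: divide_simps)
  have t1: "\<bar>2*D*e^2/m\<bar> \<le> 24*D/sv"
  proof -
    have "\<bar>2*D*e^2/m\<bar> = 2*D*e^2*(1/m)" using D1 mpos by simp
    also have "\<dots> \<le> 2*D*4*(3/sv)" using D1 e2 im mpos by (intro mult_mono) auto
    finally show ?thesis by simp
  qed
  have t2: "\<bar>D^2*e^3*(sv+3*m)/(3*m^3)\<bar> \<le> 144*D^2/sv^2"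
  proof -
    have "\<bar>D^2*e^3*(sv+3*m)/(3*m^3)\<bar> = D^2*\<bar>e\<bar>^3*(sv+3*m)/(3*m^3)"
      using mpos spos by (simp add: abs_mult power_abs)
    also have "\<dots> \<le> D^2*8*(6*m)/(3*m^3)"
      using e3 sm mpos spos by (intro divide_right_mono mult_mono) auto
    also have "\<dots> = 16*D^2*(1/m)^2" using mpos by (simp add: field_simps eval_nat_numeral)
    also have "\<dots> \<le> 16*D^2*(3/sv)^2" using im mpos by (intro mult_left_mono power_mono) auto
    also have "\<dots> = 144*D^2/sv^2" by (simp add: field_simps)
    finally show ?thesis .
  qed
  have s2: "144*D^2/sv^2 \<le> 144*D^2/sv"
    using s0 by (intro divide_left_mono) (auto simp: power2_eq_square)
  have DD: "24*D/sv \<le> 24*D^2/sv" using D1 spos by (intro divide_right_mono) (auto simp: power2_eq_square)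
  have main: "(D+1)^2*m + 2*(D+1)*x/m - x^2*G - sv*((D+1)^2 + 2*(D+1)*D - D^2/3)
     = (e + 2*D*e^2/m + D^2*e^3*(sv+3*m)/(3*m^3)) + E"
    using ident unfolding E_def by (simp add: algebra_simps)
  have "\<bar>(e + 2*D*e^2/m + D^2*e^3*(sv+3*m)/(3*m^3)) + E\<bar> \<le> \<bar>e\<bar> + \<bar>2*D*e^2/m\<bar> + \<bar>D^2*e^3*(sv+3*m)/(3*m^3)\<bar> + E"
    using E0 by linarith
  also have "\<dots> \<le> 2 + 24*D^2/sv + 144*D^2/sv + 4/15*(243*D^2/sv)" using ea t1 t2 s2 DD E2 by linarith
  also have "\<dots> \<le> 2 + 233*D^2/sv" using spos by (simp add: field_simps)
  finally show ?thesis using main by simp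
qed


lemma powr_bound:
  fixes D dd x sv :: real
  assumes D1: "D \<ge> 1" and dd: "dd = D + 1" and x: "x > 0" and sv: "sv = sqrt (x/D)"
  shows "D*(2 + 233*D^2/sv) \<le> 233 * dd powr (7/2) * x powr (-1/2) + 2 * dd^2"
proof -
  have Dp: "D > 0" using D1 by simp
  have svx: "sv = sqrt x / sqrt D" using sv by (simp add: real_sqrt_divide)
  have a: "D*(233*D^2/sv) = 233*(D^3* sqrt D)/sqrt x"
    using Dp x unfolding svx by (simp add: field_simps eval_nat_numeral)
  have p1: "dd powr (7/2) = dd^3 * sqrt dd"
  proof -
    have "dd powr (7/2) = dd powr (3 + 1/2)" by simp
    also have "\<dots> = dd powr 3 * dd powr (1/2)" by (rule powr_add)
    also have "\<dots> = dd^3 * sqrt dd" using dd D1 by (simp add: powr_half_sqrt powr_realpow)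
    finally show ?thesis .
  qed
  have p2: "x powr (-1/2) = 1/sqrt x" using x by (simp add: powr_minus_divide powr_half_sqrt)
  have m1: "D^3* sqrt D \<le> dd^3* sqrt dd" using dd D1 by (intro mult_mono power_mono) auto
  have "233*(D^3* sqrt D)/sqrt x \<le> 233*(dd^3* sqrt dd)/sqrt x"
    using m1 x by (intro divide_right_mono) auto
  also have "\<dots> = 233 * dd powr (7/2) * x powr (-1/2)" using p1 p2 by simp
  finally have b: "D*(233*D^2/sv) \<le> 233 * dd powr (7/2) * x powr (-1/2)" using a by simp
  have c: "2*D \<le> 2*dd^2" using dd D1 by (simp add: power2_eq_square algebra_simps)
  show ?thesis using b c by (simp add: distrib_left)
qed

theorem proposition9:
  "\<exists>C1 C2::real. \<forall>(d::int) (x::real).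
     x > 0 \<and> 0 \<le> d - 1 \<and> real_of_int (d - 1) \<le> x / 2 \<longrightarrow>
     \<bar>(\<Sum>k\<in>{Kfun (d - 1) x - d + 1<..Kfun (d - 1) x}.
          (real_of_int d)\<^sup>2 * real_of_int \<lfloor>x / real_of_int k\<rfloor>
          + 2 * real_of_int d * x / real_of_int \<lfloor>x / real_of_int k\<rfloor>
          - x\<^sup>2 * Ffun (x / real_of_int k))
       - (8 * (real_of_int d)\<^sup>2 - 4 * real_of_int d - 1) / 3 * sqrt (real_of_int (d - 1) * x)\<bar>
     \<le> C1 * real_of_int d powr (7/2) * x powr (-1/2) + C2 * (real_of_int d)\<^sup>2"
proof (rule exI[of _ "233::real"], rule exI[of _ "2::real"], intro allI impI)
  fix d :: int and x :: real
  assume H: "x > 0 \<and> 0 \<le> d - 1 \<and> real_of_int (d - 1) \<le> x / 2"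
  then have x0: "x > 0" and d1: "d \<ge> 1" and dx: "real_of_int (d - 1) \<le> x / 2" by auto
  define T where "T k = (real_of_int d)\<^sup>2 * real_of_int \<lfloor>x / real_of_int k\<rfloor>
          + 2 * real_of_int d * x / real_of_int \<lfloor>x / real_of_int k\<rfloor>
          - x\<^sup>2 * Ffun (x / real_of_int k)" for k :: int
  have rhs0: "0 \<le> 233 * real_of_int d powr (7/2) * x powr (-1/2) + 2 * (real_of_int d)\<^sup>2" by simp
  show "\<bar>(\<Sum>k\<in>{Kfun (d - 1) x - d + 1<..Kfun (d - 1) x}.
          (real_of_int d)\<^sup>2 * real_of_int \<lfloor>x / real_of_int k\<rfloor>
          + 2 * real_of_int d * x / real_of_int \<lfloor>x / real_of_int k\<rfloor>
          - x\<^sup>2 * Ffun (x / real_of_int k))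
       - (8 * (real_of_int d)\<^sup>2 - 4 * real_of_int d - 1) / 3 * sqrt (real_of_int (d - 1) * x)\<bar>
     \<le> 233 * real_of_int d powr (7/2) * x powr (-1/2) + 2 * (real_of_int d)\<^sup>2"
  proof (cases "d = 1")
    case True
    have "Kfun 0 x = 0" by (simp add: Kfun_def)
    then show ?thesis using True rhs0 by simp
  next
    case False
    then have d2: "d \<ge> 2" using d1 by simp
    define D where "D = real_of_int (d - 1)"
    have D1: "D \<ge> 1" using d2 by (simp add: D_def)
    have dD: "real_of_int d = D + 1" by (simp add: D_def)
    have Dx: "2*D \<le> x" using dx by (simp add: D_def)
    define q where "q = sqrt (D^2 + 4*D*x)"
    define r where "r = (D + q)/2"
    define K where "K = Kfun (d - 1) x"
    have Kr: "K = floor r" unfolding K_def Kfun_def r_def q_def D_def by simp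
    have q2: "q^2 = D^2 + 4*D*x" unfolding q_def using D1 x0 by simp
    have rr: "r*(r-D) = D*x" unfolding r_def using q2 by (simp add: field_simps power2_eq_square)
    have q3: "q \<ge> 3*D"
    proof -
      have "sqrt ((3*D)^2) \<le> q" unfolding q_def using D1 Dx
        by (intro real_sqrt_le_mono) (simp add: power2_eq_square algebra_simps)
      moreover have "sqrt ((3*D)^2) = 3*D" by (rule real_sqrt_unique) (use D1 in auto)
      ultimately show ?thesis by linarith
    qed
    have r2: "r \<ge> 2*D" using q3 by (simp add: r_def)
    define sv where "sv = sqrt (x/D)"
    have sv2: "sv^2 = x/D" using x0 D1 by (simp add: sv_def)
    have xsv: "x = D * sv^2" using sv2 D1 by simp
    have svlo: "sv \<ge> (r-D)/D"
    proof -
      have "((r-D)/D)^2 \<le> x/D" using rr r2 D1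
        by (simp add: power2_eq_square field_simps)
      then have "sqrt (((r-D)/D)^2) \<le> sv" unfolding sv_def by (rule real_sqrt_le_mono)
      then show ?thesis using r2 D1 by simp
    qed
    have svhi: "sv \<le> r/D"
    proof -
      have "x/D \<le> (r/D)^2" using rr r2 D1
        by (simp add: power2_eq_square field_simps)
      then have "sv \<le> sqrt ((r/D)^2)" unfolding sv_def by (rule real_sqrt_le_mono)
      then show ?thesis using r2 D1 by simp
    qed
    have rD1: "(r-D)/D \<ge> 1" using r2 D1 by (simp add: field_simps)
    have sv1: "sv \<ge> 1" using svlo rD1 by linarith
    define c where "c = sv*((D+1)^2 + 2*(D+1)*D - D^2/3)"
    have xr: "x / r = (r-D)/D" using rr r2 D1 by (simp add: field_simps)
    have xrD: "x / (r-D) = r/D" using rr r2 D1 by (simp add: field_simps)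
    have per: "\<bar>T k - c\<bar> \<le> 2 + 233*D^2/sv" if k: "k \<in> {K - d + 1<..K}" for k
    proof -
      have kr: "real_of_int k \<le> r" using k Kr by (simp add: le_floor_iff)
      have "real_of_int K > r - 1" using Kr by linarith
      then have kr2: "real_of_int k > r - D" using k by (simp add: D_def)
      have kpos: "real_of_int k > 0" using kr2 r2 D1 by linarith
      define t where "t = x / real_of_int k"
      have tlo: "t \<ge> (r-D)/D"
      proof -
        have "x / r \<le> x / real_of_int k" using kr kpos x0 by (intro divide_left_mono) auto
        then show ?thesis using xr by (simp add: t_def)
      qed
      have thi: "t < r/D"
      proof -
        have "x / real_of_int k < x / (r - D)" using kr2 kpos x0 r2 D1 by (intro divide_strict_left_mono) auto
        then show ?thesis using xrD by (simp add: t_def)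
      qed
      have tlo1: "(r-D)/D \<ge> 1" using r2 D1 by (simp add: field_simps)
      define m where "m = floor t"
      have m1: "m \<ge> 1" using tlo tlo1 unfolding m_def by (simp add: le_floor_iff)
      have mle: "real_of_int m \<le> t" unfolding m_def by simp
      have mgt: "real_of_int m > t - 1" unfolding m_def by linarith
      have rD: "r/D = (r-D)/D + 1" using D1 by (simp add: field_simps)
      have e: "\<bar>real_of_int m - sv\<bar> \<le> 2" using mle mgt thi tlo svlo svhi rD by linarith
      have sm: "sv \<le> 3 * real_of_int m" using mgt tlo svhi rD m1 by linarith
      define M where "M = nat m"
      have Mm: "int M = m" "real M = real_of_int m" using m1 by (auto simp: M_def)
      have FB: "Ffun t \<le> 1/(3*real M^3) \<and> Ffun t \<ge> 1/(3*real M^3) - 4/(15*real M^5)"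
      proof (rule Ffun_bounds)
        show "1 \<le> M" using m1 Mm(1) by linarith
        show "floor t = int M" using Mm(1) by (simp add: m_def)
      qed
      have tb: "\<bar>(D+1)^2*real_of_int m + 2*(D+1)*x/real_of_int m - x^2*Ffun t - sv*((D+1)^2 + 2*(D+1)*D - D^2/3)\<bar> \<le> 2 + 233*D^2/sv"
        by (rule term_bound[OF D1 xsv sv1]) (use m1 e sm FB Mm in auto)
      have "T k = (D+1)^2*real_of_int m + 2*(D+1)*x/real_of_int m - x^2*Ffun t"
        unfolding T_def m_def t_def dD by simp
      then show ?thesis using tb by (simp add: c_def)
    qed
    have card: "real (card {K - d + 1<..K}) = D" using d1 by (simp add: D_def)
    have sq: "sqrt (real_of_int (d - 1) * x) = D * sv"
    proof -
      have e1: "real_of_int (d - 1) * x = D^2 * (x/D)" using D1 by (simp add: D_def power2_eq_square)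
      have e2: "sqrt (D^2 * (x/D)) = D * sv" unfolding sv_def real_sqrt_mult using D1 by simp
      show ?thesis unfolding e1 by (rule e2)
    qed
    have coef: "(8 * (real_of_int d)\<^sup>2 - 4 * real_of_int d - 1) / 3 * sqrt (real_of_int (d - 1) * x) = D * c"
      unfolding sq c_def dD by (simp add: field_simps power2_eq_square)
    have "\<bar>(\<Sum>k\<in>{K - d + 1<..K}. T k) - D * c\<bar> = \<bar>\<Sum>k\<in>{K - d + 1<..K}. (T k - c)\<bar>"
      using card by (simp add: sum_subtractf)
    also have "\<dots> \<le> (\<Sum>k\<in>{K - d + 1<..K}. \<bar>T k - c\<bar>)" by (rule sum_abs)
    also have "\<dots> \<le> (\<Sum>k\<in>{K - d + 1<..K}. 2 + 233*D^2/sv)" using per by (intro sum_mono) auto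
    also have "\<dots> = D*(2 + 233*D^2/sv)" using card by simp
    also have "\<dots> \<le> 233 * real_of_int d powr (7/2) * x powr (-1/2) + 2 * (real_of_int d)^2"
      by (rule powr_bound[OF D1 dD x0 sv_def])
    finally have fin: "\<bar>(\<Sum>k\<in>{K - d + 1<..K}. T k) - D * c\<bar> \<le> 233 * real_of_int d powr (7/2) * x powr (-1/2) + 2 * (real_of_int d)^2" .
    have "(\<Sum>k\<in>{K - d + 1<..K}. T k) = (\<Sum>k\<in>{Kfun (d - 1) x - d + 1<..Kfun (d - 1) x}.
          (real_of_int d)\<^sup>2 * real_of_int \<lfloor>x / real_of_int k\<rfloor>
          + 2 * real_of_int d * x / real_of_int \<lfloor>x / real_of_int k\<rfloor>
          - x\<^sup>2 * Ffun (x / real_of_int k))" unfolding T_def K_def ..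
    with fin coef show ?thesis by simp
  qed
qed

end
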